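(* Let $\mathfrak{F}=\langle W,\{W_{\mathfrak{d}^{\alpha_i}_j}\},\{W_{\mathfrak{e}^{\alpha_i}}\},R_\Box,R_{\mathsf{A}},R_\blacksquare,R_{\mathsf{H}}\rangle$ be any $\mathsf{TLAE}$-frame. Then for every $w\in W$: $(w,w)\notin R_\blacksquare$, $(w,w)\notin R_\Box$, $(w,w)\notin R_{\mathsf{H}}$, and $(w,w)\notin R_{\mathsf{A}}$.
   Context: Fix finite sets $\mathtt{Action}=\{\delta_1,\dots,\delta_n\}$ (atomic action types) and $\mathtt{Agent}=\{\alpha_1,\dots,\alpha_m\}$ (agents). The set $\mathtt{Action}^*$ of action types is generated by $\Delta::=\delta_j\mid\Delta\cup\Delta\mid\overline{\Delta}$. For each agent $\alpha_i$ and each $j$ there is a propositional constant $\mathfrak{d}^{\alpha_i}_j$ and for each agent $\alpha_i$ a propositional constant $\mathfrak{e}^{\alpha_i}$. The translation $t$ is: $t(\delta_j^{\alpha_i})=\mathfrak{d}^{\alpha_i}_j$, $t(\overline{\Delta}^{\alpha_i})=\neg t(\Delta^{\alpha_i})$, $t(\Delta^{\alpha_i}\cup\Gamma^{\alpha_k})=t(\Delta^{\alpha_i})\vee t(\Gamma^{\alpha_k})$. An $\mathcal{L}$-frame is a tuple $\langle W,\{W_{\mathfrak{d}^{\alpha_i}_j}\}_{i,j},\{W_{\mathfrak{e}^{\alpha_i}}\}_{i},R_\Box,R_{\mathsf{A}},R_\blacksquare,R_{\mathsf{H}}\rangle$ where $W$ is a set of moments, each $W_{\mathfrak{d}^{\alpha_i}_j},W_{\mathfrak{e}^{\alpha_i}}\subseteq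 W$, and $R_\Box,R_{\mathsf{A}},R_\blacksquare,R_{\mathsf{H}}$ are binary relations on $W$. For action types define $W_{t(\delta_j^{\alpha_i})}=W_{\mathfrak{d}^{\alpha_i}_j}$, $W_{t(\overline{\Delta}^{\alpha_i})}=W\setminus W_{t(\Delta^{\alpha_i})}$, $W_{t(\Delta^{\alpha_i}\cup\Gamma^{\alpha_k})}=W_{t(\Delta^{\alpha_i})}\cup W_{t(\Gamma^{\alpha_k})}$. A $\mathsf{TLAE}$-frame is an $\mathcal{L}$-frame satisfying: (pA3) if $R_{\mathsf{A}}wu$ and $R_{\mathsf{A}}wv$ then $u=v$; (pA4) if $R_{\mathsf{A}}wu$ then $R_\Box wu$; (pA5) for every $w$, all pairwise distinct agents $\alpha_{1},\dots,\alpha_{k}$ and (not necessarily distinct) $\Delta_1,\dots,\Delta_k\in\mathtt{Action}^*$: if for each $i$ there is $u_i$ with $R_\Box wu_i$ and $u_i\in W_{t(\Delta_i^{\alpha_i})}$, then there is $v$ with $R_\Box wv$ and $v\in W_{t(\Delta_1^{\alpha_1})}\cap\dots\cap W_{t(\Delta_k^{\alpha_k})}$; (pA6) for every $w$ and agent $\alpha_i$: if some $v$ with $R_\Box wv$ lies in $W_{\mathfrak{e}^{\alpha_i}}$, then some $u$ with $R_\Box wu$ lies outside $W_{\mathfrak{e}^{\alpha_i}}$; (pA10;A11) $R_\Box wv$ iff $R_\blacksquare vw$; (pA12) if $R_\blacksquare wu$ and $R_\blacksquare wv$ then $u=v$; (pA9;A14) $R_{\mathsf{H}}$ is the transitive closure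 of $R_\blacksquare$; (pA13) for every $w$, either there is no $v$ with $R_{\mathsf{H}}wv$, or there is $u$ with $R_{\mathsf{H}}wu$ such that there is no $z$ with $R_{\mathsf{H}}uz$. *)

theory Defs
  imports Main
begin

datatype 'ac action_type = Atom 'ac | AUn "'ac action_type" "'ac action_type" | ACompl "'ac action_type"

fun ext :: "'w set \<Rightarrow> ('ag \<Rightarrow> 'ac \<Rightarrow> 'w set) \<Rightarrow> 'ag \<Rightarrow> 'ac action_type \<Rightarrow> 'w set" where
  "ext W D a (Atom j) = D a j"
| "ext W D a (ACompl d) = W - ext W D a d"
| "ext W D a (AUn d g) = ext W D a d \<union> ext W D a g"

text \<open>L-frame: W, sets D a j = W_{d^a_j}, E a = W_{e^a},
  relations RBox, RA, RBlack (black box), RH on W.\<close>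
definition L_frame ::
  "'w set \<Rightarrow> ('ag::finite \<Rightarrow> 'ac::finite \<Rightarrow> 'w set) \<Rightarrow> ('ag \<Rightarrow> 'w set)
   \<Rightarrow> ('w \<Rightarrow> 'w \<Rightarrow> bool) \<Rightarrow> ('w \<Rightarrow> 'w \<Rightarrow> bool) \<Rightarrow> ('w \<Rightarrow> 'w \<Rightarrow> bool) \<Rightarrow> ('w \<Rightarrow> 'w \<Rightarrow> bool) \<Rightarrow> bool"
  where
  "L_frame W D E RBox RA RBlack RH \<longleftrightarrow>
     (\<forall>a j. D a j \<subseteq> W) \<and> (\<forall>a. E a \<subseteq> W) \<and>
     (\<forall>R \<in> {RBox, RA, RBlack, RH}. \<forall>x y. R x y \<longrightarrow> x \<in> W \<and> y \<in> W)"

definition TLAE_frame ::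
  "'w set \<Rightarrow> ('ag::finite \<Rightarrow> 'ac::finite \<Rightarrow> 'w set) \<Rightarrow> ('ag \<Rightarrow> 'w set)
   \<Rightarrow> ('w \<Rightarrow> 'w \<Rightarrow> bool) \<Rightarrow> ('w \<Rightarrow> 'w \<Rightarrow> bool) \<Rightarrow> ('w \<Rightarrow> 'w \<Rightarrow> bool) \<Rightarrow> ('w \<Rightarrow> 'w \<Rightarrow> bool) \<Rightarrow> bool"
  where
  "TLAE_frame W D E RBox RA RBlack RH \<longleftrightarrow>
     L_frame W D E RBox RA RBlack RH \<and>
     \<comment> \<open>pA3\<close>
     (\<forall>w u v. RA w u \<and> RA w v \<longrightarrow> u = v) \<and>
     \<comment> \<open>pA4\<close>
     (\<forall>w u. RA w u \<longrightarrow> RBox w u) \<and>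
     \<comment> \<open>pA5: agents as (pairwise distinct, k \<ge> 1), action types ds\<close>
     (\<forall>w \<in> W. \<forall>(as :: 'ag list) (ds :: 'ac action_type list).
        as \<noteq> [] \<and> distinct as \<and> length ds = length as \<and>
        (\<forall>i < length as. \<exists>u. RBox w u \<and> u \<in> ext W D (as ! i) (ds ! i)) \<longrightarrow>
        (\<exists>v. RBox w v \<and> (\<forall>i < length as. v \<in> ext W D (as ! i) (ds ! i)))) \<and>
     \<comment> \<open>pA6\<close>
     (\<forall>w \<in> W. \<forall>a. (\<exists>v. RBox w v \<and> v \<in> E a) \<longrightarrow> (\<exists>u. RBox w u \<and> u \<notin> E a)) \<and>
     \<comment> \<open>pA10;A11\<close>
     (\<forall>w v. RBox w v \<longleftrightarrow> RBlack v w) \<and>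
     \<comment> \<open>pA12\<close>
     (\<forall>w u v. RBlack w u \<and> RBlack w v \<longrightarrow> u = v) \<and>
     \<comment> \<open>pA9;A14\<close>
     RH = tranclp RBlack \<and>
     \<comment> \<open>pA13\<close>
     (\<forall>w \<in> W. (\<not> (\<exists>v. RH w v)) \<or> (\<exists>u. RH w u \<and> \<not> (\<exists>z. RH u z)))"

end

theory Submission
  imports Defs
begin

lemma cyc:
  assumes f: "\<forall>w u v. R w u \<and> R w v \<longrightarrow> u = v"
    and c: "R\<^sup>+\<^sup>+ w w" and h: "R\<^sup>+\<^sup>+ w u"
  shows "R\<^sup>*\<^sup>* u w"
  using h
proof (induction rule: tranclp_induct)
  case (base y)
  from c obtain z where "R w z" "R\<^sup>*\<^sup>* z w" using tranclpD by metis
  then show ?case using f base by metis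
next
  case (step y v)
  have "R\<^sup>+\<^sup>+ y w" using step.IH c by (rule rtranclp_tranclp_tranclp)
  then obtain z where "R y z" "R\<^sup>*\<^sup>* z w" using tranclpD by metis
  then show ?case using f step by metis
qed

theorem mainTheorem1:
  fixes W :: "'w set" and D :: "'ag::finite \<Rightarrow> 'ac::finite \<Rightarrow> 'w set" and E :: "'ag \<Rightarrow> 'w set"
    and RBox RA RBlack RH :: "'w \<Rightarrow> 'w \<Rightarrow> bool"
  assumes "TLAE_frame W D E RBox RA RBlack RH"
  shows "\<forall>w \<in> W. \<not> RBlack w w \<and> \<not> RBox w w \<and> \<not> RH w w \<and> \<not> RA w w"
proof -
  have f: "\<forall>w u v. RBlack w u \<and> RBlack w v \<longrightarrow> u = v"
    and H: "RH = tranclp RBlack"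
    and box: "\<forall>w v. RBox w v \<longleftrightarrow> RBlack v w"
    and A: "\<forall>w u. RA w u \<longrightarrow> RBox w u"
    and p13: "\<forall>w \<in> W. (\<not> (\<exists>v. RH w v)) \<or> (\<exists>u. RH w u \<and> \<not> (\<exists>z. RH u z))"
    using assms unfolding TLAE_frame_def by blast+
  have nH: "\<not> RH w w" if "w \<in> W" for w
  proof
    assume c: "RH w w"
    from p13 that c obtain u where u: "RH w u" "\<not> (\<exists>z. RH u z)" by blast
    have "RBlack\<^sup>*\<^sup>* u w" using cyc[OF f] c u(1) H by simp
    then have "RH u w \<or> u = w" using H by (metis rtranclpD)
    then show False using u(2) c by blast
  qed
  have nB: "\<not> RBlack w w" if "w \<in> W" for w
    using nH[OF that] H by auto
  show ?thesis using nB nH box A by blast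
qed

end
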